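(* Let $T$ be a rooted tree with root $v$, with $n$ vertices and $l$ leaves, where the root is not counted as a leaf. Then $\alpha(T,v)\ge n-l-1+2^l$.
   Context: All trees are finite. Here a leaf is a non-root vertex of degree 1 (the root is never counted as a leaf, even if it has degree 1). A subtree is a nonempty vertex set inducing a connected subgraph, and $\alpha(T,v)$ is the number of subtrees of $T$ containing $v$. *)

theory Defs
  imports Main
begin

definition simple_graph :: "'a set \<Rightarrow> ('a \<Rightarrow> 'a \<Rightarrow> bool) \<Rightarrow> bool" where
  "simple_graph V E \<longleftrightarrow> finite V \<and> (\<forall>x y. E x y \<longrightarrow> x \<in> V \<and> y \<in> V)
     \<and> (\<forall>x y. E x y \<longrightarrow> E y x) \<and> (\<forall>x. \<not> E x x)"

definition induced_connected :: "('a \<Rightarrow> 'a \<Rightarrow> bool) \<Rightarrow> 'a set \<Rightarrow> bool" where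
  "induced_connected E S \<longleftrightarrow>
     (\<forall>x\<in>S. \<forall>y\<in>S. (\<lambda>a b. a \<in> S \<and> b \<in> S \<and> E a b)\<^sup>*\<^sup>* x y)"

definition is_cycle :: "('a \<Rightarrow> 'a \<Rightarrow> bool) \<Rightarrow> 'a list \<Rightarrow> bool" where
  "is_cycle E cs \<longleftrightarrow> length cs \<ge> 3 \<and> distinct cs
     \<and> (\<forall>i. Suc i < length cs \<longrightarrow> E (cs ! i) (cs ! Suc i))
     \<and> E (last cs) (hd cs)"

definition is_tree :: "'a set \<Rightarrow> ('a \<Rightarrow> 'a \<Rightarrow> bool) \<Rightarrow> bool" where
  "is_tree V E \<longleftrightarrow> simple_graph V E \<and> V \<noteq> {} \<and> induced_connected E V
     \<and> (\<nexists>cs. is_cycle E cs)"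

definition degree :: "'a set \<Rightarrow> ('a \<Rightarrow> 'a \<Rightarrow> bool) \<Rightarrow> 'a \<Rightarrow> nat" where
  "degree V E u = card {w \<in> V. E u w}"

definition leaves :: "'a set \<Rightarrow> ('a \<Rightarrow> 'a \<Rightarrow> bool) \<Rightarrow> 'a \<Rightarrow> 'a set" where
  "leaves V E r = {u \<in> V. u \<noteq> r \<and> degree V E u = 1}"

definition subtrees :: "'a set \<Rightarrow> ('a \<Rightarrow> 'a \<Rightarrow> bool) \<Rightarrow> 'a set set" where
  "subtrees V E = {S. S \<subseteq> V \<and> S \<noteq> {} \<and> induced_connected E S}"

definition alpha :: "'a set \<Rightarrow> ('a \<Rightarrow> 'a \<Rightarrow> bool) \<Rightarrow> 'a \<Rightarrow> nat" where
  "alpha V E v = card {S \<in> subtrees V E. v \<in> S}"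

end

theory Submission
  imports Defs
begin

lemma conn_remove:
  assumes ic: "induced_connected E S" and sym: "\<forall>x y. E x y \<longrightarrow> E y x"
    and irr: "\<forall>x. \<not> E x x"
    and nb: "\<forall>w\<in>S. E u w \<longrightarrow> w = p"
  shows "induced_connected E (S - {u})"
proof -
  let ?R = "\<lambda>a b. a \<in> S \<and> b \<in> S \<and> E a b"
  let ?R' = "\<lambda>a b. a \<in> S - {u} \<and> b \<in> S - {u} \<and> E a b"
  have key: "?R\<^sup>*\<^sup>* x y \<Longrightarrow> x \<noteq> u \<Longrightarrow> (y \<noteq> u \<longrightarrow> ?R'\<^sup>*\<^sup>* x y) \<and> (y = u \<longrightarrow> ?R'\<^sup>*\<^sup>* x p)" for x y
  proof (induction rule: rtranclp_induct)
    case base thus ?case by simp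
  next
    case (step y z)
    show ?case
    proof (cases "z = u")
      case True
      then have "y = p" using step.hyps(2) sym nb by blast
      moreover have "y \<noteq> u" using step.hyps(2) True irr by blast
      ultimately show ?thesis using step.IH step.prems True by blast
    next
      case False
      show ?thesis
      proof (cases "y = u")
        case True
        then have "z = p" using step.hyps(2) nb by blast
        then show ?thesis using step.IH step.prems True False by blast
      next
        case F2: False
        have "?R'\<^sup>*\<^sup>* x y" using step.IH step.prems F2 by blast
        moreover have "?R' y z" using step.hyps(2) F2 False by blast
        ultimately have "?R'\<^sup>*\<^sup>* x z" by (rule rtranclp.rtrancl_into_rtrancl)
        then show ?thesis using False by blast
      qed
    qed
  qed
  show ?thesis unfolding induced_connected_def
  proof (intro ballI)
    fix x y assume "x \<in> S - {u}" "y \<in> S - {u}"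
    then have "?R\<^sup>*\<^sup>* x y" using ic unfolding induced_connected_def by blast
    then show "?R'\<^sup>*\<^sup>* x y" using key \<open>x \<in> S - {u}\<close> \<open>y \<in> S - {u}\<close> by blast
  qed
qed

lemma rtranclp_sym_rel:
  assumes "r\<^sup>*\<^sup>* x y" and "\<forall>a b. r a b \<longrightarrow> r b a"
  shows "r\<^sup>*\<^sup>* y x"
  using assms
proof (induction rule: rtranclp_induct)
  case base thus ?case by simp
next
  case (step y z)
  then show ?case by (meson converse_rtranclp_into_rtranclp)
qed

lemma reach_closed:
  assumes "(\<lambda>a b. a\<in>S \<and> b\<in>S \<and> E a b)\<^sup>*\<^sup>* v y"
  shows "(\<lambda>a b. a \<in> {y. (\<lambda>a b. a\<in>S \<and> b\<in>S \<and> E a b)\<^sup>*\<^sup>* v y}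
            \<and> b \<in> {y. (\<lambda>a b. a\<in>S \<and> b\<in>S \<and> E a b)\<^sup>*\<^sup>* v y} \<and> E a b)\<^sup>*\<^sup>* v y"
  using assms
proof (induction rule: rtranclp_induct)
  case base thus ?case by simp
next
  case (step y z)
  then show ?case
    by (smt (verit, best) mem_Collect_eq rtranclp.rtrancl_into_rtrancl)
qed

theorem mainTheorem9:
  fixes V :: "'a set" and E :: "'a \<Rightarrow> 'a \<Rightarrow> bool" and v :: 'a
  assumes "is_tree V E" and "v \<in> V"
  shows "int (alpha V E v) \<ge>
           int (card V) - int (card (leaves V E v)) - 1 + 2 ^ card (leaves V E v)"
proof -
  have fin: "finite V" and inV: "\<forall>x y. E x y \<longrightarrow> x \<in> V \<and> y \<in> V"
    and sym: "\<forall>x y. E x y \<longrightarrow> E y x" and irr: "\<forall>x. \<not> E x x"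
    and icV: "induced_connected E V"
    using assms(1) unfolding is_tree_def simple_graph_def by auto
  define L where "L = leaves V E v"
  have LV: "L \<subseteq> V" and vL: "v \<notin> L" unfolding L_def leaves_def by auto
  have finL: "finite L" using LV fin finite_subset by blast
  have connB: "induced_connected E (V - B)" if "B \<subseteq> L" for B
  proof -
    have "finite B" using that finL finite_subset by blast
    then show ?thesis using that
    proof (induction B rule: finite_induct)
      case empty then show ?case using icV by simp
    next
      case (insert u B)
      have uL: "u \<in> L" using insert.prems by blast
      then have "card {w \<in> V. E u w} = 1" unfolding L_def leaves_def degree_def by auto
      then obtain p where p: "{w \<in> V. E u w} = {p}" using card_1_singletonE by blast
      have nb: "\<forall>w\<in>V - B. E u w \<longrightarrow> w = p" using p by blast
      have "induced_connected E (V - B - {u})"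
        by (rule conn_remove[OF insert.IH sym irr nb]) (use insert.prems in blast)
      moreover have "V - insert u B = V - B - {u}" by blast
      ultimately show ?case by simp
    qed
  qed
  define W where "W = V - L - {v}"
  define R where "R w = (\<lambda>a b. a \<in> V - {w} \<and> b \<in> V - {w} \<and> E a b)" for w
  define C where "C w = {y. (R w)\<^sup>*\<^sup>* v y}" for w
  have Csub: "C w \<subseteq> V - {w}" if "w \<in> W" for w
  proof
    fix y assume "y \<in> C w"
    then have "(R w)\<^sup>*\<^sup>* v y" unfolding C_def by simp
    then show "y \<in> V - {w}"
      by (induction rule: rtranclp_induct) (use that assms(2) in \<open>auto simp: R_def W_def\<close>)
  qed
  have vC: "v \<in> C w" for w unfolding C_def by simp
  have Cclosed: "b \<in> C w" if "a \<in> C w" "E a b" "b \<noteq> w" "w \<in> W" for a b w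
  proof -
    have "a \<in> V - {w}" using Csub that by blast
    moreover have "b \<in> V" using inV that by blast
    ultimately have "R w a b" unfolding R_def using that by blast
    then show ?thesis using that(1) unfolding C_def
      by (simp add: rtranclp.rtrancl_into_rtrancl)
  qed
  have Cbound: "\<exists>a\<in>C w. E a w" if "w \<in> W" for w
  proof -
    have wV: "w \<in> V" using that W_def by blast
    let ?RV = "\<lambda>a b. a \<in> V \<and> b \<in> V \<and> E a b"
    have gen: "?RV\<^sup>*\<^sup>* v y \<Longrightarrow> y \<in> C w \<or> (\<exists>a\<in>C w. E a w)" for y
    proof (induction rule: rtranclp_induct)
      case base then show ?case using vC by blast
    next
      case (step y z)
      then show ?case using Cclosed[OF _ _ _ that] by blast
    qed
    have "?RV\<^sup>*\<^sup>* v w" using icV wV assms(2) unfolding induced_connected_def by blast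
    then have "w \<in> C w \<or> (\<exists>a\<in>C w. E a w)" by (rule gen)
    then show ?thesis using Csub[OF that] by blast
  qed
  have Cconn: "induced_connected E (C w)" if "w \<in> W" for w
    unfolding induced_connected_def
  proof (intro ballI)
    fix x y assume x: "x \<in> C w" and y: "y \<in> C w"
    let ?Q = "\<lambda>a b. a \<in> C w \<and> b \<in> C w \<and> E a b"
    have "?Q\<^sup>*\<^sup>* v x" using reach_closed[of "V - {w}" E v x] x unfolding C_def R_def by simp
    then have "?Q\<^sup>*\<^sup>* x v" by (rule rtranclp_sym_rel) (use sym in blast)
    moreover have "?Q\<^sup>*\<^sup>* v y" using reach_closed[of "V - {w}" E v y] y unfolding C_def R_def by simp
    ultimately show "?Q\<^sup>*\<^sup>* x y" by (rule rtranclp_trans)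
  qed
  have Cinj: "inj_on C W"
  proof (rule inj_onI)
    fix w w' assume w: "w \<in> W" and w': "w' \<in> W" and eq: "C w = C w'"
    show "w = w'"
    proof (rule ccontr)
      assume ne: "w \<noteq> w'"
      obtain a where a: "a \<in> C w'" "E a w'" using Cbound[OF w'] by blast
      have "w' \<in> C w" using Cclosed[OF _ a(2) _ w] a(1) eq ne by auto
      then show False using Csub[OF w'] eq by blast
    qed
  qed
  define T where "T = {S \<in> subtrees V E. v \<in> S}"
  define F1 where "F1 = (\<lambda>B. V - B) ` Pow L"
  define F2 where "F2 = C ` W"
  have F1T: "F1 \<subseteq> T" unfolding F1_def T_def subtrees_def using connB assms(2) vL by auto
  have F2T: "F2 \<subseteq> T" unfolding F2_def T_def subtrees_def using Cconn vC Csub by blast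
  have disj: "F1 \<inter> F2 = {}"
  proof -
    { fix B w assume B: "B \<subseteq> L" and w: "w \<in> W" and eq: "V - B = C w"
      have "w \<in> V - B" using B w W_def by blast
      then have False using eq Csub[OF w] by blast }
    then show ?thesis unfolding F1_def F2_def by blast
  qed
  have inj1: "inj_on (\<lambda>B. V - B) (Pow L)"
    by (rule inj_onI) (use LV in blast)
  have c1: "card F1 = 2 ^ card L" unfolding F1_def
    using card_image[OF inj1] card_Pow finL by simp
  have c2: "card F2 = card W" unfolding F2_def using card_image[OF Cinj] .
  have finT: "finite T" unfolding T_def subtrees_def using fin
    by (rule finite_subset[rotated, OF finite_Pow_iff[THEN iffD2]]) blast
  have "card (F1 \<union> F2) \<le> card T" using finT F1T F2T by (intro card_mono) auto
  moreover have "card (F1 \<union> F2) = card F1 + card F2"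
    using disj finT F1T F2T finite_subset by (intro card_Un_disjoint) auto
  moreover have "card W = card V - card L - 1"
    unfolding W_def using fin LV vL assms(2) finL
    by (simp add: card_Diff_subset Diff_insert2[symmetric])
  moreover have "card L + 1 \<le> card V"
  proof -
    have "insert v L \<subseteq> V" using LV assms(2) by blast
    then have "card (insert v L) \<le> card V" using fin card_mono by blast
    then show ?thesis using vL finL by simp
  qed
  ultimately have "2 ^ card L + (card V - card L - 1) \<le> alpha V E v"
    unfolding alpha_def T_def[symmetric] using c1 c2 by simp
  then have "int (2 ^ card L + (card V - card L - 1)) \<le> int (alpha V E v)" by linarith
  moreover have "int (card V - card L - 1) = int (card V) - int (card L) - 1"
    using \<open>card L + 1 \<le> card V\<close> by linarith
  ultimately show ?thesis unfolding L_def[symmetric] by simp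
qed

end
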